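(* Let $M$ be a smooth oriented $2n$-manifold and $\omega$ a near-positive 2-form on $M$. If $p\in M$ is a point with $\dim K_p=4$, then $\operatorname{rank}(D_{K_p})\le 3$.
   Context: A 2-form $\omega$ on an oriented $2n$-manifold is near-positive if $\omega^n\ge0$ with respect to the orientation. $K_p=\{v\in T_pM:\omega_p(v,\cdot)=0\}$. The intrinsic gradient on the kernel is the linear map $D_{K_p}:K_p\to\Lambda^2K_p^*$, $v\mapsto(\nabla_v\omega)|_{K_p\times K_p}$ for any connection $\nabla$ (independent of the choice). *)

theory Defs
  imports "HOL-Analysis.Analysis" "HOL-Library.Function_Algebras"
begin

text \<open>Local (chart) model: an open set U of R^(2n) = real^'m with CARD('m) = 2n.
A 2-form is given by a skew-symmetric matrix field W; its value at x on (a,b) is a . (W x b).\<close>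

definition form_at :: "(real^'a::finite \<Rightarrow> real^'a^'a) \<Rightarrow> real^'a \<Rightarrow> real^'a \<Rightarrow> real^'a \<Rightarrow> real" where
  "form_at W x a b = a \<bullet> (W x *v b)"

fun Ck_on :: "nat \<Rightarrow> 'a::euclidean_space set \<Rightarrow> ('a \<Rightarrow> 'b::real_normed_vector) \<Rightarrow> bool" where
  "Ck_on 0 U f = continuous_on U f"
| "Ck_on (Suc k) U f =
     (f differentiable_on U \<and> (\<forall>i\<in>Basis. Ck_on k U (\<lambda>x. frechet_derivative f (at x) i)))"

definition smooth_on :: "'a::euclidean_space set \<Rightarrow> ('a \<Rightarrow> 'b::real_normed_vector) \<Rightarrow> bool" where
  "smooth_on U f \<longleftrightarrow> (\<forall>k. Ck_on k U f)"

definition wedge_power_eval :: "('v \<Rightarrow> 'v \<Rightarrow> real) \<Rightarrow> nat \<Rightarrow> (nat \<Rightarrow> 'v) \<Rightarrow> real" where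
  "wedge_power_eval \<omega> n v =
     (1 / 2 ^ n) * (\<Sum>\<sigma> | \<sigma> permutes {..<2*n}.
        of_int (sign \<sigma>) * (\<Prod>i<n. \<omega> (v (\<sigma> (2*i))) (v (\<sigma> (2*i+1)))))"

text \<open>An ordered basis b 0, ..., b (2n-1) of real^'a (it fixes the orientation).\<close>
definition ordered_basis :: "nat \<Rightarrow> (nat \<Rightarrow> real^'a::finite) \<Rightarrow> bool" where
  "ordered_basis N b \<longleftrightarrow> inj_on b {..<N} \<and> independent (b ` {..<N}) \<and> span (b ` {..<N}) = UNIV"

definition near_positive :: "nat \<Rightarrow> (nat \<Rightarrow> real^'a::finite) \<Rightarrow> (real^'a) set \<Rightarrow> (real^'a \<Rightarrow> real^'a^'a) \<Rightarrow> bool" where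
  "near_positive n b U W \<longleftrightarrow> (\<forall>x\<in>U. wedge_power_eval (form_at W x) n b \<ge> 0)"

definition kernel_at :: "(real^'a::finite \<Rightarrow> real^'a^'a) \<Rightarrow> real^'a \<Rightarrow> (real^'a) set" where
  "kernel_at W p = {v. \<forall>w. form_at W p v w = 0}"

text \<open>Intrinsic gradient D_K(v) = (nabla_v omega) restricted to K x K, using the flat
  connection of the chart; elements of Lambda^2 K^* are represented as functions on
  pairs of vectors, extended by 0 outside K x K.\<close>
definition intrinsic_gradient :: "(real^'a::finite \<Rightarrow> real^'a^'a) \<Rightarrow> real^'a \<Rightarrow> real^'a \<Rightarrow> (real^'a \<Rightarrow> real^'a \<Rightarrow> real)" where
  "intrinsic_gradient W p v =
     (\<lambda>a b. if a \<in> kernel_at W p \<and> b \<in> kernel_at W p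
            then a \<bullet> (frechet_derivative W (at p) v *v b) else 0)"

definition fscale :: "real \<Rightarrow> ('v \<Rightarrow> 'v \<Rightarrow> real) \<Rightarrow> ('v \<Rightarrow> 'v \<Rightarrow> real)" where
  "fscale c f = (\<lambda>a b. c * f a b)"

definition intrinsic_gradient_rank :: "(real^'a::finite \<Rightarrow> real^'a^'a) \<Rightarrow> real^'a \<Rightarrow> nat" where
  "intrinsic_gradient_rank W p =
     vector_space.dim fscale (intrinsic_gradient W p ` kernel_at W p)"

end

theory Submission
  imports Defs
begin



abbreviation "wpe \<equiv> wedge_power_eval"

lemma wpe_swap:
  assumes "a < 2*n" "b < 2*n" "a \<noteq> b"
  shows "wpe \<alpha> n (v \<circ> Transposition.transpose a b) = - wpe \<alpha> n v"
proof -
  let ?t = "Transposition.transpose a b"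
  have tp: "?t permutes {..<2*n}" using assms by (intro permutes_swap_id) auto
  let ?T = "\<lambda>w \<sigma>. of_int (sign \<sigma>) * (\<Prod>i<n. \<alpha> (w (\<sigma> (2*i))) (w (\<sigma> (2*i+1))))"
  have "(\<Sum>\<sigma> | \<sigma> permutes {..<2*n}. ?T v \<sigma>) = (\<Sum>\<sigma> | \<sigma> permutes {..<2*n}. ?T v (?t \<circ> \<sigma>))"
    by (rule setum_permutations_compose_left[OF tp])
  also have "\<dots> = (\<Sum>\<sigma> | \<sigma> permutes {..<2*n}. - ?T (v \<circ> ?t) \<sigma>)"
  proof (rule sum.cong[OF refl])
    fix \<sigma> assume "\<sigma> \<in> {\<sigma>. \<sigma> permutes {..<2*n}}"
    then have "permutation \<sigma>" using permutation_permutes by blast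
    then have "sign (?t \<circ> \<sigma>) = - sign \<sigma>"
      using assms by (simp add: sign_compose permutation_swap_id sign_swap_id)
    then show "?T v (?t \<circ> \<sigma>) = - ?T (v \<circ> ?t) \<sigma>" by simp
  qed
  also have "\<dots> = - (\<Sum>\<sigma> | \<sigma> permutes {..<2*n}. ?T (v \<circ> ?t) \<sigma>)"
    by (simp add: sum_negf)
  finally show ?thesis unfolding wedge_power_eval_def by simp
qed

lemma wpe_eq_zero:
  assumes "a < 2*n" "b < 2*n" "a \<noteq> b" "v a = v b"
  shows "wpe \<alpha> n v = 0"
proof -
  have "v \<circ> Transposition.transpose a b = v"
    using assms by (auto simp: fun_eq_iff Transposition.transpose_def)
  with wpe_swap[OF assms(1-3), of \<alpha> v] show ?thesis by simp
qed



lemma prod_affine: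
  fixes f :: "nat \<Rightarrow> 'v::real_vector \<Rightarrow> real"
  assumes "ii \<in> I" "finite I" "\<And>i z. i \<in> I - {ii} \<Longrightarrow> f i z = g i"
    "\<And>x y c. f ii (x + c *\<^sub>R y) = f ii x + c * f ii y"
  shows "(\<Prod>i\<in>I. f i (x + c *\<^sub>R y)) = (\<Prod>i\<in>I. f i x) + c * (\<Prod>i\<in>I. f i y)"
proof -
  have e: "(\<Prod>i\<in>I. f i z) = f ii z * (\<Prod>i\<in>I - {ii}. g i)" for z
    using assms by (simp add: prod.remove)
  show ?thesis unfolding e assms(4) by (simp add: algebra_simps)
qed

lemma bil_lin1: "bilinear \<alpha> \<Longrightarrow> \<alpha> (x + c *\<^sub>R y) w = \<alpha> x w + c * \<alpha> y w"
proof -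
  assume "bilinear \<alpha>"
  then have l: "linear (\<lambda>x. \<alpha> x w)" unfolding bilinear_def by blast
  show ?thesis using linear_add[OF l, of x "c *\<^sub>R y"] linear_scale[OF l, of c y] by simp
qed

lemma bil_lin2: "bilinear \<alpha> \<Longrightarrow> \<alpha> w (x + c *\<^sub>R y) = \<alpha> w x + c * \<alpha> w y"
proof -
  assume "bilinear \<alpha>"
  then have "linear (\<alpha> w)" unfolding bilinear_def by blast
  then show ?thesis by (simp add: linear_add linear_scale)
qed

lemma wpe_slot_linear:
  fixes \<alpha> :: "'v::real_vector \<Rightarrow> 'v \<Rightarrow> real"
  assumes bil: "bilinear \<alpha>" and a: "a < 2*n"
  shows "wpe \<alpha> n (v(a := x + c *\<^sub>R y)) = wpe \<alpha> n (v(a := x)) + c * wpe \<alpha> n (v(a := y))"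
proof -
  let ?P = "\<lambda>\<sigma> z. (\<Prod>i<n. \<alpha> ((v(a:=z)) (\<sigma> (2*i))) ((v(a:=z)) (\<sigma> (2*i+1))))"
  have key: "?P \<sigma> (x + c *\<^sub>R y) = ?P \<sigma> x + c * ?P \<sigma> y" if \<sigma>: "\<sigma> permutes {..<2*n}" for \<sigma>
  proof -
    obtain k where k: "k < 2*n" "\<sigma> k = a"
      using permutes_image[OF \<sigma>] a by (metis imageE lessThan_iff)
    define ii where "ii = k div 2"
    have ii: "ii < n" using k unfolding ii_def by auto
    have inj: "inj \<sigma>" using permutes_inj[OF \<sigma>] .
    have other: "\<sigma> (2*i) \<noteq> a \<and> \<sigma> (2*i+1) \<noteq> a" if "i \<noteq> ii" for i
    proof -
      have "2*i \<noteq> k" using that unfolding ii_def by auto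
      moreover have "2*i+1 \<noteq> k" using that unfolding ii_def by auto
      ultimately show ?thesis using k inj by (auto simp: inj_eq)
    qed
    show ?thesis
    proof (rule prod_affine[where ii=ii and g="\<lambda>i. \<alpha> (v (\<sigma> (2*i))) (v (\<sigma> (2*i+1)))"])
      show "ii \<in> {..<n}" using ii by simp
      show "finite {..<n}" by simp
      show "\<alpha> ((v(a := z)) (\<sigma> (2 * i))) ((v(a := z)) (\<sigma> (2 * i + 1))) =
          \<alpha> (v (\<sigma> (2 * i))) (v (\<sigma> (2 * i + 1)))" if "i \<in> {..<n} - {ii}" for i z
        using other[of i] that by auto
      fix x' y' c'
      show "\<alpha> ((v(a := x' + c' *\<^sub>R y')) (\<sigma> (2 * ii))) ((v(a := x' + c' *\<^sub>R y')) (\<sigma> (2 * ii + 1))) =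
       \<alpha> ((v(a := x')) (\<sigma> (2 * ii))) ((v(a := x')) (\<sigma> (2 * ii + 1))) +
       c' * \<alpha> ((v(a := y')) (\<sigma> (2 * ii))) ((v(a := y')) (\<sigma> (2 * ii + 1)))"
      proof (cases "k = 2*ii")
        case True
        have "2*ii+1 \<noteq> k" using True by simp
        then have "\<sigma> (2*ii+1) \<noteq> \<sigma> k" using inj by (simp add: inj_eq)
        then have "\<sigma> (2*ii) = a" "\<sigma> (2*ii+1) \<noteq> a" using k True by auto
        then show ?thesis using bil_lin1[OF bil] by simp
      next
        case False
        then have "k = 2*ii+1" unfolding ii_def by auto
        have k2: "k = 2*ii+1" by fact
        have "2*ii \<noteq> k" using k2 by simp
        then have "\<sigma> (2*ii) \<noteq> \<sigma> k" using inj by (simp add: inj_eq)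
        then have "\<sigma> (2*ii+1) = a" "\<sigma> (2*ii) \<noteq> a" using k k2 by auto
        then show ?thesis using bil_lin2[OF bil] by simp
      qed
    qed
  qed
  let ?S = "{\<sigma>. \<sigma> permutes {..<2*n}}"
  define S where "S z = (\<Sum>\<sigma>\<in>?S. of_int (sign \<sigma>) * ?P \<sigma> z)" for z
  have w: "wpe \<alpha> n (v(a:=z)) = (1/2^n) * S z" for z
    by (simp only: wedge_power_eval_def S_def)
  have "S (x + c *\<^sub>R y) = (\<Sum>\<sigma>\<in>?S. of_int (sign \<sigma>) * ?P \<sigma> x + c * (of_int (sign \<sigma>) * ?P \<sigma> y))"
    unfolding S_def
  proof (rule sum.cong[OF refl])
    fix \<sigma> assume "\<sigma> \<in> ?S"
    then have k: "?P \<sigma> (x + c *\<^sub>R y) = ?P \<sigma> x + c * ?P \<sigma> y" using key by blast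
    have r: "\<And>a p q::real. a * (p + c*q) = a*p + c*(a*q)" by (simp add: algebra_simps)
    show "of_int (sign \<sigma>) * ?P \<sigma> (x + c *\<^sub>R y) = of_int (sign \<sigma>) * ?P \<sigma> x + c * (of_int (sign \<sigma>) * ?P \<sigma> y)"
      by (subst k) (rule r)
  qed
  also have "\<dots> = S x + c * S y"
    unfolding S_def by (simp only: sum.distrib sum_distrib_left)
  finally have "S (x + c *\<^sub>R y) = S x + c * S y" .
  then show ?thesis unfolding w by (simp add: add_divide_distrib)
qed



lemma wpe_zero_slot:
  fixes \<alpha> :: "'v::real_vector \<Rightarrow> 'v \<Rightarrow> real"
  assumes "bilinear \<alpha>" "a < 2*n"
  shows "wpe \<alpha> n (v(a := 0)) = 0"
  using wpe_slot_linear[OF assms, of v 0 1 0] by simp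

lemma wpe_scale:
  fixes \<alpha> :: "'v::real_vector \<Rightarrow> 'v \<Rightarrow> real"
  assumes "bilinear \<alpha>" "a < 2*n"
  shows "wpe \<alpha> n (v(a := c *\<^sub>R v a)) = c * wpe \<alpha> n v"
  using wpe_slot_linear[OF assms, of v 0 c "v a"] wpe_zero_slot[OF assms, of v] by simp

lemma wpe_shear:
  fixes \<alpha> :: "'v::real_vector \<Rightarrow> 'v \<Rightarrow> real"
  assumes "bilinear \<alpha>" "a < 2*n" "b < 2*n" "a \<noteq> b"
  shows "wpe \<alpha> n (v(a := v a + c *\<^sub>R v b)) = wpe \<alpha> n v"
proof -
  have "wpe \<alpha> n (v(a := v b)) = 0"
    by (rule wpe_eq_zero[of a n b]) (use assms in auto)
  then show ?thesis using wpe_slot_linear[OF assms(1,2), of v "v a" c "v b"] by simp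
qed

lemma wpe_multi_shear:
  fixes \<alpha> :: "'v::real_vector \<Rightarrow> 'v \<Rightarrow> real"
  assumes bil: "bilinear \<alpha>" and pq: "p < 2*n" "q < 2*n" "p \<noteq> q"
  shows "r \<le> p \<Longrightarrow> r \<le> q \<Longrightarrow>
    wpe \<alpha> n (\<lambda>k. if k < r then v k + f k *\<^sub>R v p + g k *\<^sub>R v q else v k) = wpe \<alpha> n v"
proof (induction r)
  case 0
  then show ?case by simp
next
  case (Suc r)
  define u where "u = (\<lambda>k. if k < r then v k + f k *\<^sub>R v p + g k *\<^sub>R v q else v k)"
  have ur: "u r = v r" "u p = v p" "u q = v q" using Suc.prems unfolding u_def by auto
  define u1 where "u1 = u(r := u r + f r *\<^sub>R u p)"
  have "(\<lambda>k. if k < Suc r then v k + f k *\<^sub>R v p + g k *\<^sub>R v q else v k) = u1(r := u1 r + g r *\<^sub>R u1 q)"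
    using Suc.prems unfolding u1_def u_def by (auto simp: fun_eq_iff)
  moreover have "wpe \<alpha> n (u1(r := u1 r + g r *\<^sub>R u1 q)) = wpe \<alpha> n u1"
    by (rule wpe_shear[OF bil]) (use Suc.prems pq in auto)
  moreover have "wpe \<alpha> n u1 = wpe \<alpha> n u"
    unfolding u1_def by (rule wpe_shear[OF bil]) (use Suc.prems pq in auto)
  moreover have "wpe \<alpha> n u = wpe \<alpha> n v" using Suc by (simp add: u_def)
  ultimately show ?case by simp
qed



lemma rho_even:
  fixes i n i' :: nat
  assumes "i < Suc n" "i' < Suc n"
  shows "(Transposition.transpose (2*i) (2*n) \<circ> Transposition.transpose (2*i+1) (2*n+1)) (2*i') = 2 * Transposition.transpose i n i'"
    and "(Transposition.transpose (2*i) (2*n) \<circ> Transposition.transpose (2*i+1) (2*n+1)) (2*i'+1) = 2 * Transposition.transpose i n i' + 1"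
  using assms by (auto simp: Transposition.transpose_def)

lemma rho_inv:
  fixes i n :: nat
  shows "(Transposition.transpose (2*i) (2*n) \<circ> Transposition.transpose (2*i+1) (2*n+1)) \<circ>
         (Transposition.transpose (2*i) (2*n) \<circ> Transposition.transpose (2*i+1) (2*n+1)) = id"
  by (auto simp: Transposition.transpose_def fun_eq_iff; presburger)

lemma rho_sign:
  fixes i n :: nat
  assumes "i < Suc n"
  shows "sign (Transposition.transpose (2*i) (2*n) \<circ> Transposition.transpose (2*i+1) (2*n+1)) = 1"
  by (simp add: sign_compose permutation_swap_id sign_swap_id)

lemma rho_permutes:
  fixes i n :: nat
  assumes "i < Suc n"
  shows "(Transposition.transpose (2*i) (2*n) \<circ> Transposition.transpose (2*i+1) (2*n+1)) permutes {..<2*Suc n}"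
  using assms by (intro permutes_compose permutes_swap_id) auto



lemma wpe_peel:
  fixes \<alpha> :: "'v \<Rightarrow> 'v \<Rightarrow> real"
  assumes skew: "\<And>x y. \<alpha> x y = - \<alpha> y x"
    and z: "\<And>j. j < 2*n \<Longrightarrow> \<alpha> (v j) (v (2*n)) = 0"
    and z': "\<And>j. j < 2*n \<Longrightarrow> \<alpha> (v j) (v (2*n+1)) = 0"
  shows "wpe \<alpha> (Suc n) v = real (Suc n) * \<alpha> (v (2*n)) (v (2*n+1)) * wpe \<alpha> n v"
proof -
  define p where "p = 2*n"
  define q where "q = 2*n+1"
  define S' where "S' = {\<sigma>. \<sigma> permutes {..<2*Suc n}}"
  define S where "S = {\<sigma>. \<sigma> permutes {..<2*n}}"
  define T where "T \<sigma> = of_int (sign \<sigma>) * (\<Prod>i<Suc n. \<alpha> (v (\<sigma> (2*i))) (v (\<sigma> (2*i+1))))" for \<sigma>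
  define T0 where "T0 \<sigma> = of_int (sign \<sigma>) * (\<Prod>i<n. \<alpha> (v (\<sigma> (2*i))) (v (\<sigma> (2*i+1))))" for \<sigma>
  define C where "C i = {\<sigma>\<in>S'. (\<sigma> (2*i) = p \<and> \<sigma> (2*i+1) = q) \<or> (\<sigma> (2*i) = q \<and> \<sigma> (2*i+1) = p)}" for i
  have finS': "finite S'" unfolding S'_def by (rule finite_permutations) simp
  have finS: "finite S" unfolding S_def by (rule finite_permutations) simp
  have aa: "\<alpha> x x = 0" for x using skew[of x x] by simp
  have out: "T \<sigma> = 0" if \<sigma>: "\<sigma> \<in> S'" and nc: "\<forall>i<Suc n. \<sigma> \<notin> C i" for \<sigma>
  proof -
    have sp: "\<sigma> permutes {..<2*Suc n}" using \<sigma> unfolding S'_def by simp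
    have inj: "inj \<sigma>" using permutes_inj[OF sp] .
    have "p \<in> \<sigma> ` {..<2*Suc n}" using permutes_image[OF sp] unfolding p_def by simp
    then obtain k where k: "k < 2*Suc n" "\<sigma> k = p" by auto
    define i where "i = k div 2"
    have i: "i < Suc n" using k unfolding i_def by auto
    have "\<alpha> (v (\<sigma> (2*i))) (v (\<sigma> (2*i+1))) = 0"
    proof (cases "even k")
      case True
      then have k2: "k = 2*i" unfolding i_def by auto
      have "\<sigma> (2*i+1) \<noteq> p" using inj k k2 by (auto simp: inj_eq)
      moreover have "\<sigma> (2*i+1) \<noteq> q" using nc i k k2 \<sigma> unfolding C_def by auto
      moreover have "\<sigma> (2*i+1) < 2*Suc n" using permutes_in_image[OF sp] i by auto
      ultimately have "\<sigma> (2*i+1) < 2*n" unfolding p_def q_def by auto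
      then have "\<alpha> (v (\<sigma> (2*i+1))) (v p) = 0" using z unfolding p_def by simp
      then show ?thesis using k k2 skew[of "v p" "v (\<sigma> (2*i+1))"] by simp
    next
      case False
      then have k2: "k = 2*i+1" unfolding i_def by presburger
      have "\<sigma> (2*i) \<noteq> p" using inj k k2 by (auto simp: inj_eq)
      moreover have "\<sigma> (2*i) \<noteq> q" using nc i k k2 \<sigma> unfolding C_def by auto
      moreover have "\<sigma> (2*i) < 2*Suc n" using permutes_in_image[OF sp] i by auto
      ultimately have "\<sigma> (2*i) < 2*n" unfolding p_def q_def by auto
      then have "\<alpha> (v (\<sigma> (2*i))) (v p) = 0" using z unfolding p_def by simp
      then show ?thesis using k k2 by simp
    qed
    then have "(\<Prod>i<Suc n. \<alpha> (v (\<sigma> (2*i))) (v (\<sigma> (2*i+1)))) = 0"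
      using i by (intro prod_zero) auto
    then show ?thesis unfolding T_def by simp
  qed
  have disj: "C i \<inter> C j = {}" if "i \<noteq> j" for i j
  proof (rule ccontr)
    assume "C i \<inter> C j \<noteq> {}"
    then obtain \<sigma> where s: "\<sigma> \<in> C i" "\<sigma> \<in> C j" by blast
    then have "inj \<sigma>" unfolding C_def S'_def using permutes_inj by blast
    moreover have "\<sigma> (2*j) = \<sigma> (2*i) \<or> \<sigma> (2*j) = \<sigma> (2*i+1)" using s unfolding C_def by auto
    ultimately have "2*j = 2*i \<or> 2*j = 2*i+1" by (auto simp: inj_eq)
    then show False using that by presburger
  qed
  have "sum T S' = sum T (\<Union>i\<in>{..<Suc n}. C i)"
  proof (rule sum.mono_neutral_right[OF finS'])
    show "(\<Union>i\<in>{..<Suc n}. C i) \<subseteq> S'" unfolding C_def by auto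
    show "\<forall>\<sigma>\<in>S' - (\<Union>i\<in>{..<Suc n}. C i). T \<sigma> = 0" using out by blast
  qed
  also have "\<dots> = (\<Sum>i<Suc n. sum T (C i))"
    by (rule sum.UNION_disjoint) (use finS' disj in \<open>auto simp: C_def\<close>)
  finally have s1: "sum T S' = (\<Sum>i<Suc n. sum T (C i))" .
  have permS': "\<sigma> permutes {..<2*Suc n}" if "\<sigma> \<in> S'" for \<sigma> using that unfolding S'_def by simp
  have s2: "sum T (C i) = sum T (C n)" if i: "i < Suc n" for i
  proof -
    define \<rho> where "\<rho> = Transposition.transpose (2*i) (2*n) \<circ> Transposition.transpose (2*i+1) (2*n+1)"
    have rp: "\<rho> permutes {..<2*Suc n}" unfolding \<rho>_def by (rule rho_permutes[OF i])
    have rr: "\<sigma> \<circ> \<rho> \<circ> \<rho> = \<sigma>" for \<sigma> unfolding \<rho>_def using rho_inv[of i n] by (simp add: o_assoc[symmetric])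
    have re: "\<rho> (2*i') = 2 * Transposition.transpose i n i'" "\<rho> (2*i'+1) = 2 * Transposition.transpose i n i' + 1"
      if "i' < Suc n" for i' unfolding \<rho>_def using rho_even[OF i that] by auto
    have re2: "\<rho> (Suc (2*i')) = Suc (2 * Transposition.transpose i n i')" if "i' < Suc n" for i'
      using re(2)[OF that] by simp
    have Tinv: "T (\<sigma> \<circ> \<rho>) = T \<sigma>" if "\<sigma> \<in> S'" for \<sigma>
    proof -
      have sp: "\<sigma> permutes {..<2*Suc n}" using permS' that .
      have "permutation \<sigma>" using sp permutation_permutes by blast
      moreover have "permutation \<rho>" using rp permutation_permutes by blast
      ultimately have sg: "sign (\<sigma> \<circ> \<rho>) = sign \<sigma>" using rho_sign[OF i] unfolding \<rho>_def by (simp add: sign_compose)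
      define G where "G i' = \<alpha> (v (\<sigma> (2*i'))) (v (\<sigma> (2*i'+1)))" for i'
      have tp: "Transposition.transpose i n permutes {..<Suc n}" using i by (intro permutes_swap_id) auto
      have "(\<Prod>i'<Suc n. \<alpha> (v ((\<sigma> \<circ> \<rho>) (2*i'))) (v ((\<sigma> \<circ> \<rho>) (2*i'+1)))) = (\<Prod>i'<Suc n. (G \<circ> Transposition.transpose i n) i')"
        by (rule prod.cong[OF refl]) (simp add: re re2 G_def)
      also have "\<dots> = (\<Prod>i'<Suc n. G i')" by (rule prod.permute[OF tp, symmetric])
      finally show ?thesis unfolding T_def sg G_def by simp
    qed
    show ?thesis
    proof (rule sum.reindex_bij_witness[where i="\<lambda>\<sigma>. \<sigma> \<circ> \<rho>" and j="\<lambda>\<sigma>. \<sigma> \<circ> \<rho>"])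
      fix \<sigma> assume s: "\<sigma> \<in> C i"
      then have sS: "\<sigma> \<in> S'" unfolding C_def by simp
      show "\<sigma> \<circ> \<rho> \<circ> \<rho> = \<sigma>" by (rule rr)
      show "T (\<sigma> \<circ> \<rho>) = T \<sigma>" using Tinv[OF sS] .
      have "\<sigma> \<circ> \<rho> \<in> S'" using permutes_compose[OF rp permS'[OF sS]] unfolding S'_def by simp
      moreover have "\<rho> (2*n) = 2*i" "\<rho> (2*n+1) = 2*i+1" using re[of n] by auto
      ultimately show "\<sigma> \<circ> \<rho> \<in> C n" using s unfolding C_def by auto
    next
      fix \<sigma> assume s: "\<sigma> \<in> C n"
      then have sS: "\<sigma> \<in> S'" unfolding C_def by simp
      show "\<sigma> \<circ> \<rho> \<circ> \<rho> = \<sigma>" by (rule rr)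
      have "\<sigma> \<circ> \<rho> \<in> S'" using permutes_compose[OF rp permS'[OF sS]] unfolding S'_def by simp
      moreover have "\<rho> (2*i) = 2*n" "\<rho> (2*i+1) = 2*n+1" using re[OF i] by auto
      ultimately show "\<sigma> \<circ> \<rho> \<in> C i" using s unfolding C_def by auto
    qed
  qed
  define A where "A = {\<sigma>\<in>S'. \<sigma> p = p \<and> \<sigma> q = q}"
  define B where "B = {\<sigma>\<in>S'. \<sigma> p = q \<and> \<sigma> q = p}"
  have CAB: "C n = A \<union> B" unfolding C_def A_def B_def p_def q_def by auto
  have AB: "A \<inter> B = {}" unfolding A_def B_def p_def q_def by auto
  have AS: "A = S"
  proof
    show "A \<subseteq> S"
    proof
      fix \<sigma> assume "\<sigma> \<in> A"
      then have "\<sigma> permutes {..<2*Suc n}" "\<sigma> p = p" "\<sigma> q = q" unfolding A_def S'_def by auto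
      then have "\<sigma> permutes {..<2*n}"
        by (rule_tac permutes_superset) (auto simp: p_def q_def less_Suc_eq)
      then show "\<sigma> \<in> S" unfolding S_def by simp
    qed
    show "S \<subseteq> A"
    proof
      fix \<sigma> assume "\<sigma> \<in> S"
      then have sp: "\<sigma> permutes {..<2*n}" unfolding S_def by simp
      then have "\<sigma> permutes {..<2*Suc n}" by (rule permutes_subset) auto
      moreover have "\<sigma> p = p" "\<sigma> q = q" using permutes_not_in[OF sp] unfolding p_def q_def by auto
      ultimately show "\<sigma> \<in> A" unfolding A_def S'_def by simp
    qed
  qed
  have TA: "T \<sigma> = T0 \<sigma> * \<alpha> (v p) (v q)" if "\<sigma> \<in> S" for \<sigma>
  proof -
    have "\<sigma> (2*n) = p" "\<sigma> (2*n+1) = q" using that AS unfolding A_def p_def q_def by auto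
    then show ?thesis unfolding T_def T0_def by (simp add: prod.lessThan_Suc)
  qed
  define \<tau> where "\<tau> = Transposition.transpose p q"
  have tau: "\<tau> permutes {..<2*Suc n}" unfolding \<tau>_def p_def q_def by (intro permutes_swap_id) auto
  have sumB: "sum (\<lambda>\<sigma>. T0 \<sigma> * \<alpha> (v p) (v q)) S = sum T B"
  proof (rule sum.reindex_bij_witness[where i="\<lambda>\<sigma>. \<sigma> \<circ> \<tau>" and j="\<lambda>\<sigma>. \<sigma> \<circ> \<tau>"])
    have tt: "\<tau> \<circ> \<tau> = id" unfolding \<tau>_def by simp
    fix \<sigma> assume s: "\<sigma> \<in> S"
    show "\<sigma> \<circ> \<tau> \<circ> \<tau> = \<sigma>" using tt by (simp add: o_assoc[symmetric])
    have sp: "\<sigma> permutes {..<2*Suc n}" using s AS unfolding A_def S'_def by auto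
    have sa: "\<sigma> p = p" "\<sigma> q = q" using s AS unfolding A_def by auto
    have "\<sigma> \<circ> \<tau> \<in> S'" using permutes_compose[OF tau sp] unfolding S'_def by simp
    then show "\<sigma> \<circ> \<tau> \<in> B" unfolding B_def \<tau>_def using sa by auto
    have "permutation \<sigma>" using sp permutation_permutes by blast
    then have sg: "sign (\<sigma> \<circ> \<tau>) = - sign \<sigma>" unfolding \<tau>_def p_def q_def
      by (simp add: sign_compose permutation_swap_id sign_swap_id)
    have "(\<Prod>i<Suc n. \<alpha> (v ((\<sigma> \<circ> \<tau>) (2*i))) (v ((\<sigma> \<circ> \<tau>) (2*i+1))))
        = (\<Prod>i<n. \<alpha> (v (\<sigma> (2*i))) (v (\<sigma> (2*i+1)))) * \<alpha> (v q) (v p)"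
    proof -
      have "(\<Prod>i<n. \<alpha> (v ((\<sigma> \<circ> \<tau>) (2*i))) (v ((\<sigma> \<circ> \<tau>) (2*i+1)))) = (\<Prod>i<n. \<alpha> (v (\<sigma> (2*i))) (v (\<sigma> (2*i+1))))"
        by (rule prod.cong[OF refl]) (auto simp: \<tau>_def p_def q_def)
      moreover have "\<alpha> (v ((\<sigma> \<circ> \<tau>) (2*n))) (v ((\<sigma> \<circ> \<tau>) (2*n+1))) = \<alpha> (v q) (v p)"
        using sa unfolding \<tau>_def p_def q_def by simp
      ultimately show ?thesis by (simp add: prod.lessThan_Suc)
    qed
    then show "T (\<sigma> \<circ> \<tau>) = T0 \<sigma> * \<alpha> (v p) (v q)" unfolding T_def T0_def sg
      using skew[of "v q" "v p"] by simp
  next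
    have tt: "\<tau> \<circ> \<tau> = id" unfolding \<tau>_def by simp
    fix \<sigma> assume s: "\<sigma> \<in> B"
    show "\<sigma> \<circ> \<tau> \<circ> \<tau> = \<sigma>" using tt by (simp add: o_assoc[symmetric])
    have sp: "\<sigma> permutes {..<2*Suc n}" using s unfolding B_def S'_def by auto
    have "\<sigma> \<circ> \<tau> \<in> S'" using permutes_compose[OF tau sp] unfolding S'_def by simp
    then have "\<sigma> \<circ> \<tau> \<in> A" using s unfolding A_def B_def \<tau>_def by auto
    then show "\<sigma> \<circ> \<tau> \<in> S" using AS by simp
  qed
  have s3: "sum T (C n) = 2 * \<alpha> (v p) (v q) * sum T0 S"
  proof -
    have "sum T (C n) = sum T A + sum T B" unfolding CAB
      by (rule sum.union_disjoint) (use finS' AB in \<open>auto simp: A_def B_def\<close>)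
    also have "sum T A = sum (\<lambda>\<sigma>. T0 \<sigma> * \<alpha> (v p) (v q)) S" unfolding AS by (rule sum.cong) (auto simp: TA)
    finally show ?thesis unfolding sumB[symmetric] by (simp add: sum_distrib_right[symmetric] mult.commute)
  qed
  have "sum T S' = real (Suc n) * (2 * \<alpha> (v p) (v q) * sum T0 S)"
    unfolding s1 using s2 s3 by simp
  moreover have "wpe \<alpha> (Suc n) v = (1/2^(Suc n)) * sum T S'" unfolding wedge_power_eval_def T_def S'_def by simp
  moreover have "wpe \<alpha> n v = (1/2^n) * sum T0 S" unfolding wedge_power_eval_def T0_def S_def by simp
  ultimately show ?thesis unfolding p_def q_def by simp
qed



lemma wpe_0: "wpe \<alpha> 0 v = 1"
  unfolding wedge_power_eval_def by simp

lemma wpe_1: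
  assumes skew: "\<And>x y. \<alpha> x y = - \<alpha> y x"
  shows "wpe \<alpha> 1 v = \<alpha> (v 0) (v 1)"
  using wpe_peel[of \<alpha> 0 v, OF skew] by (simp add: wpe_0)

lemma prod_lt2: "(\<Prod>i<(2::nat). f i) = f 0 * (f 1 :: real)"
  by (simp add: numeral_2_eq_2 lessThan_Suc)

lemma wpe_2:
  assumes skew: "\<And>x y. \<alpha> x y = - \<alpha> y x"
  shows "wpe \<alpha> 2 v = 2 * (\<alpha> (v 0) (v 1) * \<alpha> (v 2) (v 3) - \<alpha> (v 0) (v 2) * \<alpha> (v 1) (v 3) + \<alpha> (v 0) (v 3) * \<alpha> (v 1) (v 2))"
proof -
  have aa: "\<alpha> x x = 0" for x using skew[of x x] by simp
  have e: "{..<2*2::nat} = insert 0 (insert 1 (insert 2 (insert 3 {})))" by auto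
  have f1: "finite (insert 1 (insert 2 (insert (3::nat) {})))" by simp
  have f2: "finite (insert 2 (insert (3::nat) {}))" by simp
  have f3: "finite (insert (3::nat) {})" by simp
  have f4: "finite ({}::nat set)" by simp
  have n1: "(0::nat) \<notin> insert 1 (insert 2 (insert (3::nat) {}))" by simp
  have n2: "(1::nat) \<notin> insert 2 (insert (3::nat) {})" by simp
  have n3: "(2::nat) \<notin> insert (3::nat) {}" by simp
  have n4: "(3::nat) \<notin> {}" by simp
  show ?thesis
    unfolding wedge_power_eval_def e prod_lt2
    unfolding sum_over_permutations_insert[OF f1 n1] sum_over_permutations_insert[OF f2 n2] sum_over_permutations_insert[OF f3 n3]
      sum_over_permutations_insert[OF f4 n4]
    apply (simp add: sign_swap_id permutation_swap_id sign_compose permutation_compose 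
        Transposition.transpose_def aa)
    apply (simp add: skew[of "v (Suc 0)" "v 0"] skew[of "v 3" "v (Suc 0)"] skew[of "v 2" "v (Suc 0)"] skew[of "v 2" "v 0"] skew[of "v 3" "v 0"] skew[of "v 2" "v 1"] skew[of "v 3" "v 1"] skew[of "v 3" "v 2"] algebra_simps)
    done
qed



definition stdf :: "nat \<Rightarrow> nat \<Rightarrow> nat \<Rightarrow> real" where
  "stdf s j l = (if s \<le> j \<and> even j \<and> l = j+1 then 1 else if s \<le> l \<and> even l \<and> j = l+1 then -1 else 0)"

definition Pf4 :: "(nat \<Rightarrow> nat \<Rightarrow> real) \<Rightarrow> real" where
  "Pf4 H = H 0 1 * H 2 3 - H 0 2 * H 1 3 + H 0 3 * H 1 2"

lemma div_t_to_zero: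
  fixes f :: "real \<Rightarrow> real"
  assumes "((\<lambda>t. f t / t) \<longlongrightarrow> L) (at 0)"
  shows "(f \<longlongrightarrow> 0) (at 0)"
proof -
  have "((\<lambda>t. t * (f t / t)) \<longlongrightarrow> 0 * L) (at 0)"
    by (rule tendsto_mult[OF tendsto_ident_at assms])
  then have "((\<lambda>t. t * (f t / t)) \<longlongrightarrow> 0) (at 0)" by simp
  moreover have "eventually (\<lambda>t. t * (f t / t) = f t) (at 0)"
    by (simp add: eventually_at_filter)
  ultimately show ?thesis by (rule Lim_transform_eventually)
qed

lemma bil_expand0:
  fixes \<alpha> :: "'v::real_vector \<Rightarrow> 'v \<Rightarrow> real"
  assumes bil: "bilinear \<alpha>"
  shows "\<alpha> (x + a *\<^sub>R P + b *\<^sub>R Q) (y + c *\<^sub>R P + e *\<^sub>R Q) =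
     \<alpha> x y + c * \<alpha> x P + e * \<alpha> x Q + a * (\<alpha> P y + c * \<alpha> P P + e * \<alpha> P Q)
     + b * (\<alpha> Q y + c * \<alpha> Q P + e * \<alpha> Q Q)"
  by (simp only: bil_lin1[OF bil] bil_lin2[OF bil]) (simp add: algebra_simps)

lemma bil_expand:
  fixes \<alpha> :: "'v::real_vector \<Rightarrow> 'v \<Rightarrow> real"
  assumes bil: "bilinear \<alpha>" and skew: "\<And>x y. \<alpha> x y = - \<alpha> y x"
  shows "\<alpha> (x + (- \<alpha> x Q / \<alpha> P Q) *\<^sub>R P + (\<alpha> x P / \<alpha> P Q) *\<^sub>R Q)
           (y + (- \<alpha> y Q / \<alpha> P Q) *\<^sub>R P + (\<alpha> y P / \<alpha> P Q) *\<^sub>R Q)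
       = \<alpha> x y + (\<alpha> x Q * \<alpha> y P - \<alpha> x P * \<alpha> y Q) / \<alpha> P Q"
proof -
  have aa: "\<alpha> z z = 0" for z using skew[of z z] by simp
  have s1: "\<alpha> P y = - \<alpha> y P" "\<alpha> Q y = - \<alpha> y Q" "\<alpha> Q P = - \<alpha> P Q" using skew[of P y] skew[of Q y] skew[of Q P] by auto
  show ?thesis
  proof (cases "\<alpha> P Q = 0")
    case True then show ?thesis by simp
  next
    case False
    show ?thesis
      unfolding bil_expand0[OF bil] aa s1
      using False by (simp add: field_simps)
  qed
qed

lemma ortho:
  fixes \<alpha> :: "'v::real_vector \<Rightarrow> 'v \<Rightarrow> real"
  assumes bil: "bilinear \<alpha>" and skew: "\<And>x y. \<alpha> x y = - \<alpha> y x" and d: "\<alpha> P Q \<noteq> 0"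
  shows "\<alpha> (x + (- \<alpha> x Q / \<alpha> P Q) *\<^sub>R P + (\<alpha> x P / \<alpha> P Q) *\<^sub>R Q) P = 0"
    and "\<alpha> (x + (- \<alpha> x Q / \<alpha> P Q) *\<^sub>R P + (\<alpha> x P / \<alpha> P Q) *\<^sub>R Q) Q = 0"
proof -
  have aa: "\<alpha> z z = 0" for z using skew[of z z] by simp
  have s1: "\<alpha> Q P = - \<alpha> P Q" using skew[of Q P] by auto
  show "\<alpha> (x + (- \<alpha> x Q / \<alpha> P Q) *\<^sub>R P + (\<alpha> x P / \<alpha> P Q) *\<^sub>R Q) P = 0"
    unfolding bil_lin1[OF bil] aa s1 using d by (simp add: field_simps)
  show "\<alpha> (x + (- \<alpha> x Q / \<alpha> P Q) *\<^sub>R P + (\<alpha> x P / \<alpha> P Q) *\<^sub>R Q) Q = 0"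
    unfolding bil_lin1[OF bil] aa s1 using d by (simp add: field_simps)
qed

lemma asym:
  fixes \<alpha> :: "real \<Rightarrow> 'v::real_vector \<Rightarrow> 'v \<Rightarrow> real"
  assumes bil: "\<And>t. bilinear (\<alpha> t)" and skew: "\<And>t x y. \<alpha> t x y = - \<alpha> t y x"
  shows "(\<And>j l. j < 2*m+4 \<Longrightarrow> l < 2*m+4 \<Longrightarrow> ((\<lambda>t. (\<alpha> t (e t j) (e t l) - stdf 4 j l) / t) \<longlongrightarrow> H j l) (at 0))
    \<Longrightarrow> ((\<lambda>t. wpe (\<alpha> t) (m+2) (e t) / t^2) \<longlongrightarrow> fact (m+2) * Pf4 H) (at 0)"
proof (induction m arbitrary: e)
  case 0
  have lim: "((\<lambda>t. \<alpha> t (e t j) (e t l) / t) \<longlongrightarrow> H j l) (at 0)" if "j<4" "l<4" for j l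
    using 0[of j l] that by (simp add: stdf_def)
  have eq: "wpe (\<alpha> t) (0+2) (e t) / t^2 = 2 * ((\<alpha> t (e t 0) (e t 1)/t) * (\<alpha> t (e t 2) (e t 3)/t)
     - (\<alpha> t (e t 0) (e t 2)/t) * (\<alpha> t (e t 1) (e t 3)/t) + (\<alpha> t (e t 0) (e t 3)/t) * (\<alpha> t (e t 1) (e t 2)/t))" for t
  proof -
    have w2: "wpe (\<alpha> t) (0+2) (e t) = 2 * (\<alpha> t (e t 0) (e t 1) * \<alpha> t (e t 2) (e t 3) - \<alpha> t (e t 0) (e t 2) * \<alpha> t (e t 1) (e t 3) + \<alpha> t (e t 0) (e t 3) * \<alpha> t (e t 1) (e t 2))"
      using wpe_2[of "\<alpha> t" "e t", OF skew] by (simp only: add_0)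
    show ?thesis unfolding w2 by (simp add: power2_eq_square divide_inverse algebra_simps)
  qed
  have "((\<lambda>t. 2 * ((\<alpha> t (e t 0) (e t 1)/t) * (\<alpha> t (e t 2) (e t 3)/t)
     - (\<alpha> t (e t 0) (e t 2)/t) * (\<alpha> t (e t 1) (e t 3)/t) + (\<alpha> t (e t 0) (e t 3)/t) * (\<alpha> t (e t 1) (e t 2)/t)))
     \<longlongrightarrow> 2 * (H 0 1 * H 2 3 - H 0 2 * H 1 3 + H 0 3 * H 1 2)) (at 0)"
    by (intro tendsto_intros lim) auto
  then show ?case unfolding eq Pf4_def by (simp add: numeral_2_eq_2)
next
  case (Suc m)
  define p where "p = 2*m+4"
  define q where "q = 2*m+5"
  define a where "a t j l = \<alpha> t (e t j) (e t l)" for t j l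
  have pre: "((\<lambda>t. (a t j l - stdf 4 j l) / t) \<longlongrightarrow> H j l) (at 0)" if "j \<le> q" "l \<le> q" for j l
    using Suc.prems[of j l] that unfolding a_def q_def by simp
  have std0: "stdf 4 j q = 0" "stdf 4 j p = 0" if "j < p" for j
    using that unfolding stdf_def p_def q_def by auto
  have std1: "stdf 4 p q = 1" unfolding stdf_def p_def q_def by auto
  have limq: "((\<lambda>t. a t j q / t) \<longlongrightarrow> H j q) (at 0)" if "j < p" for j
    using pre[of j q] std0[OF that] that unfolding p_def q_def by simp
  have limp: "((\<lambda>t. a t j p / t) \<longlongrightarrow> H j p) (at 0)" if "j < p" for j
    using pre[of j p] std0[OF that] that unfolding p_def q_def by simp
  have limq0: "((\<lambda>t. a t j q) \<longlongrightarrow> 0) (at 0)" if "j < p" for j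
    by (rule div_t_to_zero[OF limq[OF that]])
  have limp0: "((\<lambda>t. a t j p) \<longlongrightarrow> 0) (at 0)" if "j < p" for j
    by (rule div_t_to_zero[OF limp[OF that]])
  have "((\<lambda>t. a t p q - 1) \<longlongrightarrow> 0) (at 0)"
    using div_t_to_zero[OF pre[of p q]] std1 unfolding p_def q_def by simp
  then have lim1: "((\<lambda>t. a t p q) \<longlongrightarrow> 1) (at 0)"
    using tendsto_add_const_iff[of "-1" "\<lambda>t. a t p q" 1] by simp
  have evne: "eventually (\<lambda>t. a t p q \<noteq> 0) (at 0)"
    using tendsto_imp_eventually_ne[OF lim1] by simp
  define e' where "e' t k = (if k < p then e t k + (- a t k q / a t p q) *\<^sub>R e t p + (a t k p / a t p q) *\<^sub>R e t q else e t k)" for t k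
  have shear: "wpe (\<alpha> t) (Suc m + 2) (e t) = wpe (\<alpha> t) (Suc m + 2) (e' t)" for t
  proof -
    have "wpe (\<alpha> t) (Suc m + 2) (\<lambda>k. if k < p then e t k + (- a t k q / a t p q) *\<^sub>R e t p + (a t k p / a t p q) *\<^sub>R e t q else e t k)
       = wpe (\<alpha> t) (Suc m + 2) (e t)"
      by (rule wpe_multi_shear[OF bil]) (auto simp: p_def q_def)
    then show ?thesis unfolding e'_def by simp
  qed
  have e'pq: "e' t p = e t p" "e' t q = e t q" for t unfolding e'_def p_def q_def by auto
  have peel: "wpe (\<alpha> t) (Suc m + 2) (e' t) = real (Suc (m+2)) * a t p q * wpe (\<alpha> t) (m+2) (e' t)"
    if ne: "a t p q \<noteq> 0" for t
  proof -
    have "wpe (\<alpha> t) (Suc (m+2)) (e' t) = real (Suc (m+2)) * \<alpha> t (e' t (2*(m+2))) (e' t (2*(m+2)+1)) * wpe (\<alpha> t) (m+2) (e' t)"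
    proof (rule wpe_peel)
      show "\<alpha> t x y = - \<alpha> t y x" for x y by (rule skew)
      fix j assume j: "j < 2*(m+2)"
      then have jp: "j < p" unfolding p_def by simp
      have ne': "\<alpha> t (e t p) (e t q) \<noteq> 0" using ne unfolding a_def .
      have pp: "2*(m+2) = p" "2*(m+2)+1 = q" unfolding p_def q_def by simp_all
      have qp: "\<not> q < p" unfolding p_def q_def by simp
      show "\<alpha> t (e' t j) (e' t (2*(m+2))) = 0"
        unfolding pp using ortho(1)[OF bil skew ne', of "e t j"] jp qp unfolding e'_def a_def by simp
      show "\<alpha> t (e' t j) (e' t (2*(m+2)+1)) = 0"
        unfolding pp(2) using ortho(2)[OF bil skew ne', of "e t j"] jp qp unfolding e'_def a_def by simp
    qed
    moreover have pp: "2*(m+2) = p" "2*(m+2)+1 = q" unfolding p_def q_def by simp_all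
    moreover have "Suc m + 2 = Suc (m+2)" by simp
    ultimately show ?thesis unfolding a_def by (simp only: e'pq)
  qed
  have IH: "((\<lambda>t. wpe (\<alpha> t) (m+2) (e' t) / t^2) \<longlongrightarrow> fact (m+2) * Pf4 H) (at 0)"
  proof (rule Suc.IH)
    fix j l assume j: "j < 2*m+4" and l: "l < 2*m+4"
    then have jp: "j < p" and lp: "l < p" unfolding p_def by auto
    have ex: "\<alpha> t (e' t j) (e' t l) = a t j l + (a t j q * a t l p - a t j p * a t l q) / a t p q" for t
      using bil_expand[OF bil skew, where x="e t j" and Q="e t q" and P="e t p" and y="e t l"] jp lp unfolding e'_def a_def by simp
    have eq: "(\<alpha> t (e' t j) (e' t l) - stdf 4 j l) / t =
       (a t j l - stdf 4 j l) / t + (a t j q / t) * a t l p / a t p q - (a t j p / t) * a t l q / a t p q" for t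
      unfolding ex by (simp add: divide_inverse algebra_simps)
    have "((\<lambda>t. (a t j l - stdf 4 j l) / t + (a t j q / t) * a t l p / a t p q - (a t j p / t) * a t l q / a t p q)
        \<longlongrightarrow> H j l + H j q * 0 / 1 - H j p * 0 / 1) (at 0)"
      by (intro tendsto_intros pre limq limp limq0 limp0 lim1 jp lp) (use j l in \<open>auto simp: p_def q_def\<close>)
    then show "((\<lambda>t. (\<alpha> t (e' t j) (e' t l) - stdf 4 j l) / t) \<longlongrightarrow> H j l) (at 0)"
      unfolding eq by simp
  qed
  have ev: "eventually (\<lambda>t. real (Suc (m+2)) * a t p q * (wpe (\<alpha> t) (m+2) (e' t) / t^2) = wpe (\<alpha> t) (Suc m + 2) (e t) / t^2) (at 0)"
    using evne
  proof eventually_elim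
    case (elim t)
    show ?case unfolding shear[of t] peel[OF elim] by simp
  qed
  have "((\<lambda>t. real (Suc (m+2)) * a t p q * (wpe (\<alpha> t) (m+2) (e' t) / t^2)) \<longlongrightarrow> real (Suc (m+2)) * 1 * (fact (m+2) * Pf4 H)) (at 0)"
    by (intro tendsto_intros lim1 IH)
  then have "((\<lambda>t. wpe (\<alpha> t) (Suc m + 2) (e t) / t^2) \<longlongrightarrow> real (Suc (m+2)) * 1 * (fact (m+2) * Pf4 H)) (at 0)"
    using ev by (rule Lim_transform_eventually)
  moreover have "real (Suc (m+2)) * 1 * (fact (m+2) * Pf4 H) = fact (Suc m + 2) * Pf4 H"
    by (simp add: fact_Suc)
  ultimately show ?case by (simp only:)
qed



inductive ops :: "nat \<Rightarrow> (nat \<Rightarrow> 'v::real_vector) \<Rightarrow> (nat \<Rightarrow> 'v) \<Rightarrow> real \<Rightarrow> bool" for N v where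
  refl: "ops N v v 1"
| swap: "ops N v w c \<Longrightarrow> a < N \<Longrightarrow> b < N \<Longrightarrow> a \<noteq> b \<Longrightarrow> ops N v (w \<circ> Transposition.transpose a b) (- c)"
| scale: "ops N v w c \<Longrightarrow> a < N \<Longrightarrow> s \<noteq> 0 \<Longrightarrow> ops N v (w(a := s *\<^sub>R w a)) (s * c)"
| shear: "ops N v w c \<Longrightarrow> a < N \<Longrightarrow> b < N \<Longrightarrow> a \<noteq> b \<Longrightarrow> ops N v (w(a := w a + s *\<^sub>R w b)) c"

lemma ops_nz: "ops N v w c \<Longrightarrow> c \<noteq> 0"
  by (induction rule: ops.induct) auto

lemma ops_wpe:
  fixes \<alpha> :: "'v::real_vector \<Rightarrow> 'v \<Rightarrow> real"
  assumes "ops N v w c" "N \<le> 2*n" "bilinear \<alpha>"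
  shows "wpe \<alpha> n w = c * wpe \<alpha> n v"
  using assms(1)
proof (induction rule: ops.induct)
  case refl then show ?case by simp
next
  case (swap w c a b)
  have "wpe \<alpha> n (w \<circ> Transposition.transpose a b) = - wpe \<alpha> n w"
    by (rule wpe_swap) (use swap.hyps assms(2) in auto)
  then show ?case using swap.IH by (simp add: comp_def)
next
  case (scale w c a s)
  then show ?case using wpe_scale[OF assms(3), of a n w s] assms(2) by (simp add: fun_upd_def)
next
  case (shear w c a b s)
  then show ?case using wpe_shear[OF assms(3), of a n b w s] assms(2) by (simp add: fun_upd_def)
qed

lemma ops_fix: "ops N v w c \<Longrightarrow> N \<le> k \<Longrightarrow> w k = v k"
  by (induction rule: ops.induct) (auto simp: Transposition.transpose_def)

lemma ops_span: "ops N v w c \<Longrightarrow> span (w ` {..<N}) = span (v ` {..<N})"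
proof (induction rule: ops.induct)
  case refl then show ?case by simp
next
  case (swap w c a b)
  have t: "Transposition.transpose a b ` {..<N} = {..<N}"
    using permutes_image[OF permutes_swap_id[of a "{..<N}" b]] swap.hyps by simp
  have "(w \<circ> Transposition.transpose a b) ` {..<N} = w ` {..<N}"
    by (simp only: image_comp[symmetric] t)
  then show ?case using swap.IH by simp
next
  case (scale w c a s)
  have "span ((w(a := s *\<^sub>R w a)) ` {..<N}) = span (w ` {..<N})"
    unfolding span_eq
  proof
    show "(w(a := s *\<^sub>R w a)) ` {..<N} \<subseteq> span (w ` {..<N})"
      using scale.hyps by (auto intro: span_base span_scale)
    show "w ` {..<N} \<subseteq> span ((w(a := s *\<^sub>R w a)) ` {..<N})"
    proof
      fix x assume "x \<in> w ` {..<N}"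
      then obtain k where k: "k < N" "x = w k" by auto
      show "x \<in> span ((w(a := s *\<^sub>R w a)) ` {..<N})"
      proof (cases "k = a")
        case True
        have "s *\<^sub>R w a \<in> span ((w(a := s *\<^sub>R w a)) ` {..<N})"
          using scale.hyps by (intro span_base) (auto intro!: image_eqI[of _ _ a])
        then have "(1/s) *\<^sub>R (s *\<^sub>R w a) \<in> span ((w(a := s *\<^sub>R w a)) ` {..<N})" by (rule span_scale)
        then show ?thesis using True k scale.hyps by simp
      next
        case False
        then show ?thesis using k by (intro span_base) (auto intro!: image_eqI[of _ _ k])
      qed
    qed
  qed
  then show ?case using scale.IH by simp
next
  case (shear w c a b s)
  have "span ((w(a := w a + s *\<^sub>R w b)) ` {..<N}) = span (w ` {..<N})"
    unfolding span_eq
  proof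
    show "(w(a := w a + s *\<^sub>R w b)) ` {..<N} \<subseteq> span (w ` {..<N})"
    proof
      fix x assume "x \<in> (w(a := w a + s *\<^sub>R w b)) ` {..<N}"
      then obtain k where k: "k < N" "x = (w(a := w a + s *\<^sub>R w b)) k" by auto
      have wa: "w a \<in> span (w ` {..<N})" "w b \<in> span (w ` {..<N})" "w k \<in> span (w ` {..<N})"
        using shear.hyps k by (auto intro: span_base)
      show "x \<in> span (w ` {..<N})"
        using k wa by (cases "k = a") (auto intro: span_add span_scale)
    qed
    show "w ` {..<N} \<subseteq> span ((w(a := w a + s *\<^sub>R w b)) ` {..<N})"
    proof
      fix x assume "x \<in> w ` {..<N}"
      then obtain k where k: "k < N" "x = w k" by auto
      show "x \<in> span ((w(a := w a + s *\<^sub>R w b)) ` {..<N})"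
      proof (cases "k = a")
        case True
        have 1: "w a + s *\<^sub>R w b \<in> span ((w(a := w a + s *\<^sub>R w b)) ` {..<N})"
          using shear.hyps by (intro span_base) (auto intro!: image_eqI[of _ _ a])
        have 2: "w b \<in> span ((w(a := w a + s *\<^sub>R w b)) ` {..<N})"
          using shear.hyps by (intro span_base) (auto intro!: image_eqI[of _ _ b])
        have "(w a + s *\<^sub>R w b) - s *\<^sub>R w b \<in> span ((w(a := w a + s *\<^sub>R w b)) ` {..<N})"
          by (intro span_diff 1 span_scale 2)
        then show ?thesis using True k by simp
      next
        case False
        then show ?thesis using k by (intro span_base) (auto intro!: image_eqI[of _ _ k])
      qed
    qed
  qed
  then show ?case using shear.IH by simp
qed

lemma ops_trans: "ops N w u d \<Longrightarrow> ops N v w c \<Longrightarrow> ops N v u (d * c)"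
proof (induction rule: ops.induct)
  case refl then show ?case by simp
next
  case (swap w' c' a b) then show ?case using ops.swap[OF swap.IH[OF swap.prems] swap.hyps(2-4)] by (simp add: comp_def)
next
  case (scale w' c' a s) then show ?case using ops.scale[OF scale.IH[OF scale.prems] scale.hyps(2-3)] by (simp add: mult.assoc fun_upd_def)
next
  case (shear w' c' a b s) then show ?case using ops.shear[OF shear.IH[OF shear.prems] shear.hyps(2-4)] by (simp add: fun_upd_def)
qed

lemma ops_mono: "ops N v w c \<Longrightarrow> N \<le> M \<Longrightarrow> ops M v w c"
  by (induction rule: ops.induct) (auto intro: ops.intros)

lemma ops_swap': "ops N v w c \<Longrightarrow> a < N \<Longrightarrow> b < N \<Longrightarrow> \<exists>c'. ops N v (w \<circ> Transposition.transpose a b) c'"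
  by (cases "a = b") (auto intro: ops.swap)

lemma ops_multi_shear:
  assumes "ops N v w c" "p < N" "q < N" "p \<noteq> q"
  shows "r \<le> p \<Longrightarrow> r \<le> q \<Longrightarrow> ops N v (\<lambda>k. if k < r then w k + f k *\<^sub>R w p + g k *\<^sub>R w q else w k) c"
proof (induction r)
  case 0 then show ?case using assms by simp
next
  case (Suc r)
  define u where "u = (\<lambda>k. if k < r then w k + f k *\<^sub>R w p + g k *\<^sub>R w q else w k)"
  have ur: "u r = w r" "u p = w p" "u q = w q" using Suc.prems unfolding u_def by auto
  define u1 where "u1 = u(r := u r + f r *\<^sub>R u p)"
  have e: "(\<lambda>k. if k < Suc r then w k + f k *\<^sub>R w p + g k *\<^sub>R w q else w k) = u1(r := u1 r + g r *\<^sub>R u1 q)"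
    using Suc.prems unfolding u1_def u_def by (auto simp: fun_eq_iff)
  have "ops N v u c" using Suc by (simp add: u_def)
  then have "ops N v u1 c" unfolding u1_def by (rule ops.shear) (use Suc.prems assms in auto)
  then have "ops N v (u1(r := u1 r + g r *\<^sub>R u1 q)) c" by (rule ops.shear) (use Suc.prems assms in auto)
  then show ?case unfolding e .
qed



lemma bil_lin_l: "bilinear \<alpha> \<Longrightarrow> linear (\<lambda>x. \<alpha> x y)" unfolding bilinear_def by blast
lemma bil_lin_r: "bilinear \<alpha> \<Longrightarrow> linear (\<alpha> x)" unfolding bilinear_def by blast

lemma bil_scale2: "bilinear \<alpha> \<Longrightarrow> \<alpha> w (c *\<^sub>R y) = c * \<alpha> w y"
  using linear_scale[OF bil_lin_r[of \<alpha> w]] by simp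

lemma stdf_facts:
  fixes k s :: nat
  assumes "s \<le> 2*k"
  shows "j < 2*k \<Longrightarrow> stdf s j (2*k) = 0" "j < 2*k \<Longrightarrow> stdf s j (2*k+1) = 0"
    "j < 2*k \<Longrightarrow> stdf s (2*k) j = 0" "j < 2*k \<Longrightarrow> stdf s (2*k+1) j = 0"
    "stdf s (2*k) (2*k+1) = 1" "stdf s (2*k+1) (2*k) = -1"
    "stdf s (2*k) (2*k) = 0" "stdf s (2*k+1) (2*k+1) = 0"
  using assms unfolding stdf_def by auto presburger+

lemma darboux:
  fixes \<alpha> :: "'v::real_vector \<Rightarrow> 'v \<Rightarrow> real"
  assumes bil: "bilinear \<alpha>" and skew: "\<And>x y. \<alpha> x y = - \<alpha> y x"
  shows "\<exists>w c r. r \<le> k \<and> ops (2*k) v w c \<and> (\<forall>j<2*k. \<forall>l<2*k. \<alpha> (w j) (w l) = stdf (2*k - 2*r) j l)"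
proof (induction k arbitrary: v)
  case 0
  show ?case by (rule exI[of _ v], rule exI[of _ 1], rule exI[of _ 0]) (auto intro: ops.refl)
next
  case (Suc k)
  define N where "N = 2 * Suc k"
  define P where "P = 2*k"
  define Q where "Q = 2*k+1"
  have PQ: "P < N" "Q < N" "P \<noteq> Q" unfolding N_def P_def Q_def by auto
  have aa: "\<alpha> x x = 0" for x using skew[of x x] by simp
  show ?case
  proof (cases "\<forall>j<N. \<forall>l<N. \<alpha> (v j) (v l) = 0")
    case True
    show ?thesis
      by (rule exI[of _ v], rule exI[of _ 1], rule exI[of _ 0]) (use True in \<open>auto intro: ops.refl simp: stdf_def N_def\<close>)
  next
    case False
    then obtain j0 l0 where jl: "j0 < N" "l0 < N" "\<alpha> (v j0) (v l0) \<noteq> 0" by blast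
    have jl0: "j0 \<noteq> l0" using jl aa by auto
    define u1 where "u1 = v \<circ> Transposition.transpose l0 Q"
    obtain c1 where o1: "ops N v u1 c1" unfolding u1_def using ops_swap'[OF ops.refl jl(2) PQ(2)] by blast
    define j1 where "j1 = (if j0 = Q then l0 else j0)"
    have u1j: "u1 j1 = v j0" "u1 Q = v l0" "j1 \<noteq> Q" "j1 < N"
      unfolding u1_def j1_def using jl jl0 by (auto simp: Transposition.transpose_def)
    define u2 where "u2 = u1 \<circ> Transposition.transpose j1 P"
    obtain c2 where o2: "ops N v u2 c2" unfolding u2_def using ops_swap'[OF o1 u1j(4) PQ(1)] by blast
    have u2PQ: "u2 P = v j0" "u2 Q = v l0"
      unfolding u2_def using u1j PQ by (auto simp: Transposition.transpose_def)
    define d where "d = \<alpha> (u2 P) (u2 Q)"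
    have d: "d \<noteq> 0" unfolding d_def u2PQ using jl by simp
    define u3 where "u3 = u2(Q := (1/d) *\<^sub>R u2 Q)"
    have o3: "ops N v u3 ((1/d) * c2)" unfolding u3_def by (rule ops.scale[OF o2 PQ(2)]) (use d in simp)
    have u3PQ: "\<alpha> (u3 P) (u3 Q) = 1" unfolding u3_def using PQ d bil_scale2[OF bil] d_def by simp
    define u4 where "u4 = (\<lambda>k'. if k' < P then u3 k' + (- \<alpha> (u3 k') (u3 Q) / \<alpha> (u3 P) (u3 Q)) *\<^sub>R u3 P
                                    + (\<alpha> (u3 k') (u3 P) / \<alpha> (u3 P) (u3 Q)) *\<^sub>R u3 Q else u3 k')"
    have o4: "ops N v u4 ((1/d) * c2)" unfolding u4_def
      by (rule ops_multi_shear[OF o3 PQ]) (auto simp: P_def Q_def)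
    have u4PQ: "u4 P = u3 P" "u4 Q = u3 Q" unfolding u4_def P_def Q_def by auto
    have orth4: "\<alpha> (u4 i) (u4 P) = 0" "\<alpha> (u4 i) (u4 Q) = 0" if "i < P" for i
      unfolding u4PQ using that ortho[OF bil skew, of "u3 P" "u3 Q" "u3 i"] u3PQ unfolding u4_def by auto
    obtain w c' r' where IH: "r' \<le> k" "ops (2*k) u4 w c'"
      "\<forall>j<2*k. \<forall>l<2*k. \<alpha> (w j) (w l) = stdf (2*k - 2*r') j l"
      using Suc.IH[of u4] by blast
    have oN: "ops N v w (c' * ((1/d) * c2))"
      by (rule ops_trans[OF ops_mono[OF IH(2)] o4]) (simp add: N_def)
    have wPQ: "w P = u3 P" "w Q = u3 Q" using ops_fix[OF IH(2)] u4PQ unfolding P_def Q_def by auto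
    have spn: "span (w ` {..<P}) = span (u4 ` {..<P})" using ops_span[OF IH(2)] unfolding P_def .
    have orthw: "\<alpha> (w j) (w P) = 0 \<and> \<alpha> (w j) (w Q) = 0" if "j < P" for j
    proof -
      have wj: "w j \<in> span (u4 ` {..<P})" using that spn span_base[of "w j" "w ` {..<P}"] by auto
      have "\<alpha> (w j) (u4 P) = 0"
        by (rule real_vector.linear_eq_0_on_span[OF bil_lin_l[OF bil] _ wj]) (use orth4 in auto)
      moreover have "\<alpha> (w j) (u4 Q) = 0"
        by (rule real_vector.linear_eq_0_on_span[OF bil_lin_l[OF bil] _ wj]) (use orth4 in auto)
      ultimately show ?thesis using wPQ u4PQ by simp
    qed
    define s where "s = 2*k - 2*r'"
    have sP: "s \<le> 2*k" unfolding s_def by simp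
    have sN: "2 * Suc k - 2 * Suc r' = s" unfolding s_def by simp
    have tab: "\<alpha> (w j) (w l) = stdf s j l" if j: "j < N" and l: "l < N" for j l
    proof -
      have jc: "j < P \<or> j = P \<or> j = Q" and lc: "l < P \<or> l = P \<or> l = Q"
        using j l unfolding N_def P_def Q_def by auto
      have wPQ1: "\<alpha> (w P) (w Q) = 1" "\<alpha> (w Q) (w P) = -1" using wPQ u3PQ skew[of "w Q" "w P"] by auto
      show ?thesis
        using jc lc
      proof (elim disjE)
        assume "j < P" "l < P" then show ?thesis using IH(3) unfolding s_def P_def by auto
      next
        assume a: "j < P" "l = P" then show ?thesis using orthw[of j] stdf_facts[OF sP] unfolding P_def by auto
      next
        assume a: "j < P" "l = Q" then show ?thesis using orthw[of j] stdf_facts[OF sP] unfolding P_def Q_def by auto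
      next
        assume a: "j = P" "l < P" then show ?thesis using orthw[of l] stdf_facts[OF sP] skew[of "w P" "w l"] unfolding P_def by auto
      next
        assume a: "j = P" "l = P" then show ?thesis using aa stdf_facts[OF sP] unfolding P_def by auto
      next
        assume a: "j = P" "l = Q" then show ?thesis using wPQ1 stdf_facts[OF sP] unfolding P_def Q_def by auto
      next
        assume a: "j = Q" "l < P" then show ?thesis using orthw[of l] stdf_facts[OF sP] skew[of "w Q" "w l"] unfolding P_def Q_def by auto
      next
        assume a: "j = Q" "l = P" then show ?thesis using wPQ1 stdf_facts[OF sP] unfolding P_def Q_def by auto
      next
        assume a: "j = Q" "l = Q" then show ?thesis using aa stdf_facts[OF sP] unfolding P_def Q_def by auto
      qed
    qed
    show ?thesis
      by (rule exI[of _ w], rule exI[of _ "c' * ((1/d) * c2)"], rule exI[of _ "Suc r'"])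
        (use IH(1) oN tab sN in \<open>auto simp: N_def\<close>)
  qed
qed



lemma form_bil: "bilinear (form_at W x)"
proof -
  have l1: "linear (\<lambda>b. a \<bullet> (W x *v b))" for a
    using linear_compose[OF matrix_vector_mul_linear[of "W x"] bounded_linear.linear[OF bounded_linear_inner_right[of a]]]
    by (simp add: o_def)
  have l2: "linear (\<lambda>a. a \<bullet> (W x *v b))" for b by (rule bounded_linear.linear[OF bounded_linear_inner_left])
  show ?thesis unfolding bilinear_def form_at_def using l1 l2 by blast
qed

lemma form_skew:
  fixes M :: "real^'a^'a"
  assumes "transpose M = - M"
  shows "a \<bullet> (M *v b) = - (b \<bullet> (M *v a))"
proof -
  have t: "M $ j $ i = - (M $ i $ j)" for i j
    using arg_cong[OF assms, of "\<lambda>A. A $ i $ j"] by (simp add: transpose_def)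
  have "a \<bullet> (M *v b) = (\<Sum>i\<in>UNIV. \<Sum>j\<in>UNIV. a $ i * M $ i $ j * b $ j)"
    by (simp add: inner_vec_def matrix_vector_mult_def sum_distrib_left mult.assoc)
  also have "\<dots> = (\<Sum>j\<in>UNIV. \<Sum>i\<in>UNIV. a $ i * M $ i $ j * b $ j)" by (rule sum.swap)
  also have "\<dots> = (\<Sum>j\<in>UNIV. \<Sum>i\<in>UNIV. - (b $ j * M $ j $ i * a $ i))"
  proof -
    have tt: "a $ i * M $ i $ j * b $ j = - (b $ j * M $ j $ i * a $ i)" for i j using t[of i j] by simp
    show ?thesis by (simp only: tt)
  qed
  also have "\<dots> = - (\<Sum>j\<in>UNIV. \<Sum>i\<in>UNIV. b $ j * M $ j $ i * a $ i)"
    by (simp add: sum_negf)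
  also have "(\<Sum>j\<in>UNIV. \<Sum>i\<in>UNIV. b $ j * M $ j $ i * a $ i) = b \<bullet> (M *v a)"
    by (simp add: inner_vec_def matrix_vector_mult_def sum_distrib_left mult.assoc)
  finally show ?thesis .
qed

lemma span_image_repr:
  fixes e :: "nat \<Rightarrow> 'v::real_vector"
  assumes "x \<in> span (e ` I)" "finite I"
  shows "\<exists>c. x = (\<Sum>i\<in>I. c i *\<^sub>R e i)"
  using assms(1)
proof (induction rule: real_vector.span_induct_alt)
  case base
  show ?case by (rule exI[of _ "\<lambda>_. 0"]) simp
next
  case (step a x y)
  then obtain c where c: "y = (\<Sum>i\<in>I. c i *\<^sub>R e i)" by blast
  from step obtain i0 where i0: "i0 \<in> I" "x = e i0" by blast
  define c' where "c' i = c i + (if i = i0 then a else 0)" for i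
  have "(\<Sum>i\<in>I. c' i *\<^sub>R e i) = (\<Sum>i\<in>I. c i *\<^sub>R e i) + (\<Sum>i\<in>I. (if i = i0 then a else 0) *\<^sub>R e i)"
    unfolding c'_def by (simp add: scaleR_add_left sum.distrib)
  also have "(\<Sum>i\<in>I. (if i = i0 then a else 0) *\<^sub>R e i) = (\<Sum>i\<in>I. if i = i0 then a *\<^sub>R e i else 0)"
    by (rule sum.cong) auto
  also have "\<dots> = a *\<^sub>R e i0" using i0 assms(2) by (simp add: sum.delta)
  finally show ?case using c i0 by (intro exI[of _ c']) simp
qed



lemma dq:
  fixes W :: "real^'m \<Rightarrow> real^'m^'m"
  assumes hd: "(W has_derivative W') (at p)" and lin: "linear W'"
  shows "((\<lambda>t. (x \<bullet> (W (p + t *\<^sub>R v) *v y) - x \<bullet> (W p *v y)) / t) \<longlongrightarrow> x \<bullet> (W' v *v y)) (at 0)"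
proof -
  define g where "g t = x \<bullet> (W (p + t *\<^sub>R v) *v y)" for t :: real
  have hl: "linear (\<lambda>M::real^'m^'m. x \<bullet> (M *v y))"
    by (rule linearI) (simp_all add: matrix_vector_mult_add_rdistrib inner_add_right scaleR_matrix_vector_assoc[symmetric])
  have hb: "bounded_linear (\<lambda>M::real^'m^'m. x \<bullet> (M *v y))" using hl linear_conv_bounded_linear by auto
  have d1: "((\<lambda>t::real. p + t *\<^sub>R v) has_derivative (\<lambda>t. t *\<^sub>R v)) (at 0)"
    by (auto intro!: derivative_eq_intros)
  have d2: "(W has_derivative W') (at ((\<lambda>t::real. p + t *\<^sub>R v) 0))" using hd by simp
  have "(W \<circ> (\<lambda>t. p + t *\<^sub>R v) has_derivative W' \<circ> (\<lambda>t. t *\<^sub>R v)) (at 0)"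
    by (rule diff_chain_at[OF d1 d2])
  then have "((\<lambda>t. x \<bullet> ((W \<circ> (\<lambda>t. p + t *\<^sub>R v)) t *v y)) has_derivative (\<lambda>t. x \<bullet> ((W' \<circ> (\<lambda>t. t *\<^sub>R v)) t *v y))) (at 0)"
    by (rule bounded_linear.has_derivative[OF hb])
  moreover have "(\<lambda>t. x \<bullet> ((W' \<circ> (\<lambda>t. t *\<^sub>R v)) t *v y)) = (*) (x \<bullet> (W' v *v y))"
    using linear_scale[OF lin] by (auto simp: fun_eq_iff scaleR_matrix_vector_assoc[symmetric])
  ultimately have "(g has_field_derivative (x \<bullet> (W' v *v y))) (at 0)"
    unfolding has_field_derivative_def g_def by (simp add: o_def)
  then show ?thesis unfolding DERIV_def g_def by simp
qed



lemma vs_fscale: "vector_space (fscale :: real \<Rightarrow> ('v \<Rightarrow> 'v \<Rightarrow> real) \<Rightarrow> ('v \<Rightarrow> 'v \<Rightarrow> real))"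
  by unfold_locales (auto simp: fscale_def fun_eq_iff algebra_simps)

lemma lin_r: "linear (\<lambda>b. x \<bullet> ((M::real^'a^'a) *v b))"
  using linear_compose[OF matrix_vector_mul_linear[of M] bounded_linear.linear[OF bounded_linear_inner_right[of x]]]
  by (simp add: o_def)

lemma lin_l: "linear (\<lambda>a. a \<bullet> ((M::real^'a^'a) *v b))"
  by (rule bounded_linear.linear[OF bounded_linear_inner_left])

lemma bil_zero: "bilinear (\<lambda>(x::'a::real_vector) (y::'a). 0::real)"
  unfolding bilinear_def by (simp add: linear_zero)

theorem lemma2p1:
  fixes W :: "real^'m \<Rightarrow> real^'m^'m" and U :: "(real^'m) set" and p :: "real^'m"
    and n :: nat and b :: "nat \<Rightarrow> real^'m"
  assumes "CARD('m) = 2 * n"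
    and "open U" and "p \<in> U"
    and "smooth_on U W"
    and "\<forall>x\<in>U. transpose (W x) = - W x"
    and "ordered_basis (2 * n) b"
    and "near_positive n b U W"
    and "dim (kernel_at W p) = 4"
  shows "intrinsic_gradient_rank W p \<le> 3"
proof -
  note card = assms(1) and openU = assms(2) and pU = assms(3) and sm = assms(4)
    and skU = assms(5) and ob = assms(6) and np = assms(7) and dimK = assms(8)
  define K where "K = kernel_at W p"
  define \<alpha>0 where "\<alpha>0 = form_at W p"
  have bil0: "bilinear \<alpha>0" unfolding \<alpha>0_def by (rule form_bil)
  have skew0: "\<alpha>0 x y = - \<alpha>0 y x" for x y
    unfolding \<alpha>0_def form_at_def using form_skew skU pU by blast
  obtain e c r where r: "r \<le> n" and oe: "ops (2*n) b e c"
    and tab: "\<forall>j<2*n. \<forall>l<2*n. \<alpha>0 (e j) (e l) = stdf (2*n - 2*r) j l"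
    using darboux[OF bil0 skew0, of n b] by blast
  define s where "s = 2*n - 2*r"
  define E where "E = e ` {..<2*n}"
  have spanE: "span E = UNIV"
    using ops_span[OF oe] ob unfolding ordered_basis_def E_def by simp
  have finE: "finite E" unfolding E_def by simp
  have dimU: "dim (UNIV :: (real^'m) set) = 2*n" using card by (simp add: dim_UNIV)
  have "2*n \<le> card E"
  proof -
    have "dim (UNIV :: (real^'m) set) = dim (span E)" using spanE by simp
    also have "\<dots> = dim E" by (rule dim_span)
    also have "\<dots> \<le> card E" by (rule real_vector.dim_le_card'[OF finE])
    finally show ?thesis using dimU by simp
  qed
  moreover have "card E \<le> 2*n" unfolding E_def using card_image_le[of "{..<2*n}" e] by simp
  ultimately have cardE: "card E = 2*n" by simp
  have injE: "inj_on e {..<2*n}" using cardE unfolding E_def by (intro eq_card_imp_inj_on) auto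
  have indE: "independent E"
    by (rule card_le_dim_spanning[of E UNIV]) (use spanE finE cardE dimU in auto)
  have subK: "subspace K"
    unfolding K_def kernel_at_def real_vector.subspace_def
    using bil_lin1[OF form_bil[of W p]] by (auto simp: form_at_def inner_add_left)
  have eK: "e j \<in> K" if "j < s" for j
  proof -
    have "\<alpha>0 (e j) w = 0" for w
    proof -
      have w: "w \<in> span E" using spanE by simp
      show ?thesis
      proof (rule real_vector.linear_eq_0_on_span[OF bil_lin_r[OF bil0] _ w[unfolded E_def]])
        fix y assume "y \<in> e ` {..<2*n}"
        then obtain l where l: "l < 2*n" "y = e l" by auto
        have "j < 2*n" using that unfolding s_def by simp
        then show "\<alpha>0 (e j) y = 0" using tab l that unfolding s_def stdf_def by auto
      qed
    qed
    then show ?thesis unfolding K_def kernel_at_def \<alpha>0_def by simp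
  qed
  have sle: "s \<le> 2*n" unfolding s_def by simp
  have evs: "even s" unfolding s_def by simp
  have Ksub: "K \<subseteq> span (e ` {..<s})"
  proof
    fix x assume xK: "x \<in> K"
    have "x \<in> span (e ` {..<2*n})" using spanE unfolding E_def by simp
    then obtain cf where cf: "x = (\<Sum>i<2*n. cf i *\<^sub>R e i)" using span_image_repr by blast
    have ax: "\<alpha>0 x y = (\<Sum>i<2*n. cf i * \<alpha>0 (e i) y)" for y
      unfolding cf using linear_sum[OF bil_lin_l[OF bil0, of y], of "\<lambda>i. cf i *\<^sub>R e i" "{..<2*n}"]
        linear_scale[OF bil_lin_l[OF bil0, of y]] by simp
    have cz: "cf l = 0" if l: "s \<le> l" "l < 2*n" for l
    proof -
      define l' where "l' = (if even l then l+1 else l-1)"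
      define sg :: real where "sg = (if even l then 1 else -1)"
      have l': "l' < 2*n" unfolding l'_def using l evs by (simp split: if_split; presburger)
      have st: "stdf s i l' = (if i = l then sg else 0)" for i
      proof (cases "even l")
        case True
        then show ?thesis unfolding stdf_def l'_def sg_def using l by auto
      next
        case False
        have l1: "l - 1 + 1 = l" "even (l-1)" "s \<le> l - 1" using False l evs by presburger+
        have l2: "\<not>(even i \<and> l - 1 = i + 1)" using False by presburger
        show ?thesis unfolding stdf_def l'_def sg_def using False l1 l2 by auto
      qed
      have "\<alpha>0 x (e l') = 0" using xK unfolding K_def kernel_at_def \<alpha>0_def by simp
      moreover have "\<alpha>0 x (e l') = (\<Sum>i<2*n. cf i * (if i = l then sg else 0))"
        unfolding ax using tab l' st unfolding s_def by (intro sum.cong) auto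
      moreover have "(\<Sum>i<2*n. cf i * (if i = l then sg else 0)) = cf l * sg"
        using l by (simp add: if_distrib sum.delta cong: if_cong)
      ultimately show ?thesis unfolding sg_def by (auto split: if_splits)
    qed
    have "x = (\<Sum>i<s. cf i *\<^sub>R e i) + (\<Sum>i\<in>{s..<2*n}. cf i *\<^sub>R e i)"
      unfolding cf using sum.atLeastLessThan_concat[of 0 s "2*n" "\<lambda>i. cf i *\<^sub>R e i"] sle by (simp add: atLeast0LessThan)
    also have "(\<Sum>i\<in>{s..<2*n}. cf i *\<^sub>R e i) = 0" using cz by (intro sum.neutral) auto
    finally have "x = (\<Sum>i<s. cf i *\<^sub>R e i)" by simp
    moreover have "(\<Sum>i<s. cf i *\<^sub>R e i) \<in> span (e ` {..<s})"
      by (rule real_vector.span_sum, rule real_vector.span_scale, rule real_vector.span_base) simp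
    ultimately show "x \<in> span (e ` {..<s})" by simp
  qed
  have Keq: "K = span (e ` {..<s})"
  proof
    show "span (e ` {..<s}) \<subseteq> K" by (rule real_vector.span_minimal[OF _ subK]) (use eK in auto)
  qed (rule Ksub)
  have "dim K = s"
  proof -
    have ind: "independent (e ` {..<s})" by (rule real_vector.independent_mono[OF indE]) (use sle in \<open>auto simp: E_def\<close>)
    have "inj_on e {..<s}" by (rule inj_on_subset[OF injE]) (use sle in auto)
    then have "card (e ` {..<s}) = s" by (simp add: card_image)
    then show ?thesis unfolding Keq using real_vector.dim_span_eq_card_independent[OF ind] by simp
  qed
  then have s4: "s = 4" using dimK unfolding K_def by simp
  define m where "m = n - 2"
  have nm: "n = m + 2" using s4 unfolding s_def m_def by simp
  have tab4: "\<alpha>0 (e j) (e l) = stdf 4 j l" if "j < 2*n" "l < 2*n" for j l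
    using tab that s4 unfolding s_def by simp
  have Wd: "W differentiable (at p)"
  proof -
    have "Ck_on (Suc 0) U W" using sm unfolding smooth_on_def by blast
    then have "W differentiable_on U" by simp
    then show ?thesis using differentiable_on_eq_differentiable_at[OF openU] pU by blast
  qed
  define W' where "W' = frechet_derivative W (at p)"
  have hd: "(W has_derivative W') (at p)" using Wd frechet_derivative_works unfolding W'_def by blast
  have linW': "linear W'" using has_derivative_bounded_linear[OF hd] bounded_linear.linear by blast
  have evU: "eventually (\<lambda>t. p + t *\<^sub>R v \<in> U) (at (0::real))" for v
  proof -
    have "((\<lambda>t::real. p + t *\<^sub>R v) \<longlongrightarrow> p + 0 *\<^sub>R v) (at 0)"
      by (intro tendsto_intros)
    then have "((\<lambda>t::real. p + t *\<^sub>R v) \<longlongrightarrow> p) (at 0)" by simp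
    then show ?thesis using topological_tendstoD openU pU by blast
  qed
  have skD: "x \<bullet> (W' v *v y) = - (y \<bullet> (W' v *v x))" for x y v
  proof -
    have l1: "((\<lambda>t. (x \<bullet> (W (p + t *\<^sub>R v) *v y) - x \<bullet> (W p *v y)) / t) \<longlongrightarrow> x \<bullet> (W' v *v y)) (at 0)"
      by (rule dq[OF hd linW'])
    have l2: "((\<lambda>t. (y \<bullet> (W (p + t *\<^sub>R v) *v x) - y \<bullet> (W p *v x)) / t) \<longlongrightarrow> y \<bullet> (W' v *v x)) (at 0)"
      by (rule dq[OF hd linW'])
    then have l2': "((\<lambda>t. - ((y \<bullet> (W (p + t *\<^sub>R v) *v x) - y \<bullet> (W p *v x)) / t)) \<longlongrightarrow> - (y \<bullet> (W' v *v x))) (at 0)"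
      by (rule tendsto_minus)
    have "eventually (\<lambda>t. - ((y \<bullet> (W (p + t *\<^sub>R v) *v x) - y \<bullet> (W p *v x)) / t) =
        (x \<bullet> (W (p + t *\<^sub>R v) *v y) - x \<bullet> (W p *v y)) / t) (at 0)"
      using evU[of v]
    proof eventually_elim
      case (elim t)
      have "x \<bullet> (W (p + t *\<^sub>R v) *v y) = - (y \<bullet> (W (p + t *\<^sub>R v) *v x))"
        using form_skew skU elim by blast
      moreover have "x \<bullet> (W p *v y) = - (y \<bullet> (W p *v x))" using form_skew skU pU by blast
      ultimately show ?case by (simp add: diff_divide_distrib)
    qed
    then have "((\<lambda>t. (x \<bullet> (W (p + t *\<^sub>R v) *v y) - x \<bullet> (W p *v y)) / t) \<longlongrightarrow> - (y \<bullet> (W' v *v x))) (at 0)"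
      using l2' by (rule Lim_transform_eventually[rotated])
    then show ?thesis using l1 tendsto_unique[OF trivial_limit_at] by blast
  qed
  define H where "H v j l = e j \<bullet> (W' v *v e l)" for v j l
  have cnz: "c \<noteq> 0" by (rule ops_nz[OF oe])
  define \<kappa> where "\<kappa> = fact (m+2) / c"
  have knz: "\<kappa> \<noteq> 0" unfolding \<kappa>_def using cnz by simp
  have sgn: "0 \<le> \<kappa> * Pf4 (H v)" for v
  proof -
    define \<alpha> where "\<alpha> t = (if p + t *\<^sub>R v \<in> U then form_at W (p + t *\<^sub>R v) else (\<lambda>_ _. 0))" for t :: real
    have bil\<alpha>: "bilinear (\<alpha> t)" for t unfolding \<alpha>_def using form_bil bil_zero by auto
    have sk\<alpha>: "\<alpha> t x y = - \<alpha> t y x" for t x y unfolding \<alpha>_def form_at_def using form_skew skU by auto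
    have lim: "((\<lambda>t. (\<alpha> t (e j) (e l) - stdf 4 j l) / t) \<longlongrightarrow> H v j l) (at 0)" if "j < 2*m+4" "l < 2*m+4" for j l
    proof -
      have st: "stdf 4 j l = e j \<bullet> (W p *v e l)" using tab4[of j l] that nm unfolding \<alpha>0_def form_at_def by simp
      have "((\<lambda>t. (e j \<bullet> (W (p + t *\<^sub>R v) *v e l) - e j \<bullet> (W p *v e l)) / t) \<longlongrightarrow> H v j l) (at 0)"
        unfolding H_def by (rule dq[OF hd linW'])
      moreover have "eventually (\<lambda>t. (e j \<bullet> (W (p + t *\<^sub>R v) *v e l) - e j \<bullet> (W p *v e l)) / t = (\<alpha> t (e j) (e l) - stdf 4 j l) / t) (at 0)"
        using evU[of v] by eventually_elim (simp add: \<alpha>_def form_at_def st)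
      ultimately show ?thesis by (rule Lim_transform_eventually)
    qed
    have A: "((\<lambda>t. wpe (\<alpha> t) (m+2) e / t^2) \<longlongrightarrow> fact (m+2) * Pf4 (H v)) (at 0)"
      by (rule asym[OF bil\<alpha> sk\<alpha>]) (use lim in simp)
    have B: "wpe (\<alpha> t) (m+2) e = c * wpe (\<alpha> t) (m+2) b" for t
      using ops_wpe[OF oe _ bil\<alpha>, of "m+2"] nm by simp
    have "((\<lambda>t. (1/c) * (wpe (\<alpha> t) (m+2) e / t^2)) \<longlongrightarrow> (1/c) * (fact (m+2) * Pf4 (H v))) (at 0)"
      by (intro tendsto_intros A)
    moreover have "(\<lambda>t. (1/c) * (wpe (\<alpha> t) (m+2) e / t^2)) = (\<lambda>t. wpe (\<alpha> t) (m+2) b / t^2)"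
      using B cnz by (auto simp: fun_eq_iff)
    moreover have "(1/c) * (fact (m+2) * Pf4 (H v)) = \<kappa> * Pf4 (H v)" unfolding \<kappa>_def by simp
    ultimately have C: "((\<lambda>t. wpe (\<alpha> t) (m+2) b / t^2) \<longlongrightarrow> \<kappa> * Pf4 (H v)) (at 0)" by simp
    have D: "eventually (\<lambda>t. 0 \<le> wpe (\<alpha> t) (m+2) b / t^2) (at 0)"
      using evU[of v]
    proof eventually_elim
      case (elim t)
      then have "0 \<le> wpe (\<alpha> t) (m+2) b" using np nm unfolding near_positive_def \<alpha>_def by simp
      then show ?case by simp
    qed
    show ?thesis using tendsto_lowerbound[OF C D trivial_limit_at] .
  qed
  have n2: "4 \<le> 2*n" using nm by simp
  have eK4: "e j \<in> K" if "j < 4" for j using eK that s4 by simp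
  have K4: "K = span (e ` {..<4})" using Keq s4 by simp
  have linH: "linear (\<lambda>v. H v j l)" for j l
  proof (rule linearI)
    fix x y show "H (x + y) j l = H x j l + H y j l"
      unfolding H_def linear_add[OF linW'] by (simp add: matrix_vector_mult_add_rdistrib inner_add_right)
  next
    fix a x show "H (a *\<^sub>R x) j l = a *\<^sub>R H x j l"
      unfolding H_def linear_scale[OF linW'] by (simp add: scaleR_matrix_vector_assoc[symmetric])
  qed
  define \<epsilon> :: real where "\<epsilon> = (if 0 < \<kappa> then 1 else -1)"
  define g where "g v = (H v 0 1 + \<epsilon> * H v 2 3, H v 0 2 - \<epsilon> * H v 1 3, H v 0 3 + \<epsilon> * H v 1 2)" for v
  have lg: "linear g"
  proof (rule linearI)
    fix x y show "g (x + y) = g x + g y"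
      unfolding g_def using linear_add[OF linH] by (simp add: algebra_simps)
  next
    fix a x show "g (a *\<^sub>R x) = a *\<^sub>R g x"
      unfolding g_def using linear_scale[OF linH] by (simp add: algebra_simps)
  qed
  obtain v0 where v0: "v0 \<in> K" "v0 \<noteq> 0" "g v0 = 0"
  proof (rule ccontr)
    assume nex: "\<not> thesis"
    have inj: "inj_on g (span K)"
    proof (rule inj_onI)
      fix x y assume xy: "x \<in> span K" "y \<in> span K" "g x = g y"
      then have "x - y \<in> K" using real_vector.span_eq_iff[of K] subK real_vector.subspace_diff by blast
      moreover have "g (x - y) = 0" using xy linear_diff[OF lg] by simp
      ultimately have "x - y = 0" using nex that by blast
      then show "x = y" by simp
    qed
    have "dim (g ` K) = dim K" by (rule dim_image_eq[OF lg inj])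
    moreover have "dim (g ` K) \<le> DIM(real \<times> real \<times> real)" by (rule dim_subset_UNIV)
    ultimately show False using dimK unfolding K_def by simp
  qed
  have skH: "H v0 j l = - H v0 l j" for j l unfolding H_def using skD by blast
  have six: "H v0 0 1 = 0 \<and> H v0 0 2 = 0 \<and> H v0 0 3 = 0 \<and> H v0 1 2 = 0 \<and> H v0 1 3 = 0 \<and> H v0 2 3 = 0"
  proof -
    define a where "a = H v0 0 1"
    define b' where "b' = H v0 0 2"
    define d where "d = H v0 0 3"
    have g1: "H v0 0 1 + \<epsilon> * H v0 2 3 = 0" "H v0 0 2 - \<epsilon> * H v0 1 3 = 0" "H v0 0 3 + \<epsilon> * H v0 1 2 = 0"
      using v0(3) unfolding g_def by (simp_all add: prod_eq_iff)
    have sg0: "0 \<le> \<kappa> * Pf4 (H v0)" by (rule sgn)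
    show ?thesis
    proof (cases "0 < \<kappa>")
      case True
      then have e1: "\<epsilon> = 1" unfolding \<epsilon>_def by simp
      have r: "H v0 2 3 = - a" "H v0 1 3 = b'" "H v0 1 2 = - d" using g1 e1 unfolding a_def b'_def d_def by simp_all
      have "Pf4 (H v0) = - (a^2 + b'^2 + d^2)" unfolding Pf4_def r by (simp add: a_def b'_def d_def power2_eq_square)
      then have "0 \<le> - (a^2 + b'^2 + d^2)" using sg0 True by (simp add: zero_le_mult_iff)
      moreover have "0 \<le> a^2" "0 \<le> b'^2" "0 \<le> d^2" by simp_all
      ultimately have "a^2 = 0" "b'^2 = 0" "d^2 = 0" by linarith+
      then show ?thesis using r unfolding a_def b'_def d_def by simp
    next
      case False
      then have kn: "\<kappa> < 0" using knz by simp
      then have e1: "\<epsilon> = -1" unfolding \<epsilon>_def by simp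
      have r: "H v0 2 3 = a" "H v0 1 3 = - b'" "H v0 1 2 = d" using g1 e1 unfolding a_def b'_def d_def by simp_all
      have "Pf4 (H v0) = a^2 + b'^2 + d^2" unfolding Pf4_def r by (simp add: a_def b'_def d_def power2_eq_square)
      then have "a^2 + b'^2 + d^2 \<le> 0" using sg0 kn by (simp add: zero_le_mult_iff)
      moreover have "0 \<le> a^2" "0 \<le> b'^2" "0 \<le> d^2" by simp_all
      ultimately have "a^2 = 0" "b'^2 = 0" "d^2 = 0" by linarith+
      then show ?thesis using r unfolding a_def b'_def d_def by simp
    qed
  qed
  have Hz: "H v0 j l = 0" if "j < 4" "l < 4" for j l
  proof -
    have j: "j = 0 \<or> j = 1 \<or> j = 2 \<or> j = 3" and l: "l = 0 \<or> l = 1 \<or> l = 2 \<or> l = 3" using that by auto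
    have dg: "H v0 i i = 0" for i using skH[of i i] by simp
    show ?thesis using j l six dg skH[of 1 0] skH[of 2 0] skH[of 3 0] skH[of 2 1] skH[of 3 1] skH[of 3 2] by auto
  qed
  define D where "D = intrinsic_gradient W p"
  have D0: "D v0 = 0"
  proof -
    define M where "M = W' v0"
    have z1: "e j \<bullet> (M *v y) = 0" if "j < 4" "y \<in> K" for j y
    proof (rule real_vector.linear_eq_0_on_span[OF lin_r])
      show "y \<in> span (e ` {..<4})" using that K4 by simp
      fix z assume "z \<in> e ` {..<4}"
      then obtain l where "l < 4" "z = e l" by auto
      then show "e j \<bullet> (M *v z) = 0" using Hz[of j l] that unfolding H_def M_def by simp
    qed
    have z2: "x \<bullet> (M *v y) = 0" if "x \<in> K" "y \<in> K" for x y
    proof (rule real_vector.linear_eq_0_on_span[OF lin_l])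
      show "x \<in> span (e ` {..<4})" using that K4 by simp
      fix z assume "z \<in> e ` {..<4}"
      then obtain j where "j < 4" "z = e j" by auto
      then show "z \<bullet> (M *v y) = 0" using z1 that by simp
    qed
    show ?thesis unfolding D_def intrinsic_gradient_def using z2 unfolding K_def M_def W'_def
      by (auto simp: fun_eq_iff)
  qed
  interpret fs: vector_space "fscale :: real \<Rightarrow> (real^'m \<Rightarrow> real^'m \<Rightarrow> real) \<Rightarrow> _" by (rule vs_fscale)
  have Dadd: "D (x + y) = D x + D y" for x y
    unfolding D_def intrinsic_gradient_def W'_def[symmetric] linear_add[OF linW']
    by (auto simp: fun_eq_iff matrix_vector_mult_add_rdistrib inner_add_right)
  have Dscale: "D (a *\<^sub>R x) = fscale a (D x)" for a x
    unfolding D_def intrinsic_gradient_def W'_def[symmetric] linear_scale[OF linW'] fscale_def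
    by (auto simp: fun_eq_iff scaleR_matrix_vector_assoc[symmetric])
  have Dz: "D 0 = 0" using Dscale[of 0 0] unfolding fscale_def by (simp add: fun_eq_iff)
  obtain B where B: "{v0} \<subseteq> B" "B \<subseteq> K" "independent B" "K \<subseteq> span B"
    using real_vector.maximal_independent_subset_extend[of "{v0}" K] v0 real_vector.dependent_single[of v0] by auto
  have finB: "finite B" using independent_imp_finite[OF B(3)] .
  have cardB: "card B = 4" using real_vector.basis_card_eq_dim[OF B(2) B(4) B(3)] dimK unfolding K_def by simp
  define B' where "B' = B - {v0}"
  have cardB': "card B' = 3" unfolding B'_def using cardB B(1) finB by (simp add: card_Diff_singleton)
  have finB': "finite B'" unfolding B'_def using finB by simp
  have sub: "D ` K \<subseteq> fs.span (D ` B')"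
  proof
    fix z assume "z \<in> D ` K"
    then obtain x where x: "x \<in> K" "z = D x" by auto
    have "x \<in> span B" using x B(4) by auto
    then have "D x \<in> fs.span (D ` B')"
    proof (rule real_vector.span_induct)
      show "subspace {x. D x \<in> fs.span (D ` B')}"
        unfolding real_vector.subspace_def
        using Dz Dadd Dscale fs.span_zero fs.span_add fs.span_scale by auto
      fix y assume y: "y \<in> B"
      show "D y \<in> fs.span (D ` B')"
      proof (cases "y = v0")
        case True then show ?thesis using D0 fs.span_zero by simp
      next
        case False then have "D y \<in> D ` B'" using y unfolding B'_def by auto
        then show ?thesis using fs.span_base by auto
      qed
    qed
    then show "z \<in> fs.span (D ` B')" using x by simp
  qed
  have "fs.dim (D ` K) \<le> card (D ` B')" by (rule fs.dim_le_card[OF sub]) (use finB' in simp)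
  also have "\<dots> \<le> card B'" by (rule card_image_le[OF finB'])
  finally show ?thesis unfolding intrinsic_gradient_rank_def D_def K_def cardB' .
qed

end
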